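(* Let $\nu\ge1$, $\Psi\neq\emptyset$, $n\in\mathbb N$, and let $W_1,\dots,W_n:\Omega\to\ell^\infty(\Psi)$ be arbitrary (not necessarily measurable) maps on a probability space $(\Omega,\Upsilon,P)$. For $1\le i\le j\le n$ and $\psi\in\Psi$ let $S^W_{i,j}(\psi)=\sum_{k=i}^jW_k(\psi)$ and $M^W_{i,j}(\psi)=\max_{k=i,\dots,j}|S^W_{i,k}(\psi)|$. Suppose there exist $\alpha>1$ and $g:\{1,\dots,n\}^2\to\mathbb R$ such that $\mathrm E^*\{\sup_{\psi\in\Psi}|S^W_{i,j}(\psi)|^\nu\}\le g^\alpha(i,j)$ for all $1\le i\le j\le n$, and (i') $g(i,j)\ge0$ for all $(i,j)\in\{1,\dots,n\}^2$; (ii') $g(i,j)\le g(i,j+1)$ for all $1\le i\le j\le n-1$; (iii') $g(i,j)+g(j+1,k)\le Q\,g(i,k)$ for all $1\le i\le j<k\le n$, for some $Q\in[1,2^{(\alpha-1)/\alpha})$. Then there exists a constant $A$ depending only on $\alpha,\nu,Q$ such that $$\mathrm E^*\Big\{\sup_{\psi\in\Psi}|M^W_{1,n}(\psi)|^\nu\Big\}\le A\,g^\alpha(1,n);$$ one may take $A=\big(1-Q^{\alpha/\nu}/2^{(\alpha-1)/\nu}\big)^{-\nu}$.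
   Context: $\ell^\infty(\Psi)$ is the space of bounded real functions on $\Psi$. $\mathrm E^*$ denotes outer expectation: $\mathrm E^*\{Y\}=\inf\{\mathrm E\{U\}:U\ge Y,\ U:\Omega\to[-\infty,\infty]\text{ measurable},\ \mathrm E\{U\}\text{ exists}\}$. *)

theory Defs
  imports "HOL-Probability.Probability"
begin

definition ereal_expectation_exists :: "'a measure \<Rightarrow> ('a \<Rightarrow> ereal) \<Rightarrow> bool" where
  "ereal_expectation_exists M U \<longleftrightarrow>
     \<not> ((\<integral>\<^sup>+ x. e2ennreal (U x) \<partial>M) = \<infinity> \<and> (\<integral>\<^sup>+ x. e2ennreal (- U x) \<partial>M) = \<infinity>)"

definition ereal_expectation :: "'a measure \<Rightarrow> ('a \<Rightarrow> ereal) \<Rightarrow> ereal" where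
  "ereal_expectation M U =
     enn2ereal (\<integral>\<^sup>+ x. e2ennreal (U x) \<partial>M) - enn2ereal (\<integral>\<^sup>+ x. e2ennreal (- U x) \<partial>M)"

definition outer_expectation :: "'a measure \<Rightarrow> ('a \<Rightarrow> ereal) \<Rightarrow> ereal" where
  "outer_expectation M Y =
     Inf {ereal_expectation M U | U. U \<in> borel_measurable M \<and>
            (\<forall>\<omega>\<in>space M. Y \<omega> \<le> U \<omega>) \<and> ereal_expectation_exists M U}"

definition partial_sum :: "(nat \<Rightarrow> 'a \<Rightarrow> 'p \<Rightarrow> real) \<Rightarrow> nat \<Rightarrow> nat \<Rightarrow> 'a \<Rightarrow> 'p \<Rightarrow> real" where
  "partial_sum W i j \<omega> \<psi> = (\<Sum>k = i..j. W k \<omega> \<psi>)"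

definition max_partial_sum :: "(nat \<Rightarrow> 'a \<Rightarrow> 'p \<Rightarrow> real) \<Rightarrow> nat \<Rightarrow> nat \<Rightarrow> 'a \<Rightarrow> 'p \<Rightarrow> real" where
  "max_partial_sum W i j \<omega> \<psi> = Max ((\<lambda>k. \<bar>partial_sum W i k \<omega> \<psi>\<bar>) ` {i..j})"

end

theory Submission
  imports Defs
begin

lemma ee_nonneg:
  assumes "\<forall>\<omega>\<in>space M. 0 \<le> U \<omega>"
  shows "ereal_expectation M U = enn2ereal (\<integral>\<^sup>+ x. e2ennreal (U x) \<partial>M)"
    and "ereal_expectation_exists M U"
proof -
  have "(\<integral>\<^sup>+ x. e2ennreal (- U x) \<partial>M) = (\<integral>\<^sup>+ x. 0 \<partial>M)"
    by (rule nn_integral_cong) (use assms in \<open>auto intro!: e2ennreal_neg\<close>)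
  then have z: "(\<integral>\<^sup>+ x. e2ennreal (- U x) \<partial>M) = 0" by simp
  show "ereal_expectation M U = enn2ereal (\<integral>\<^sup>+ x. e2ennreal (U x) \<partial>M)"
    unfolding ereal_expectation_def z by (simp add: zero_ennreal.rep_eq)
  show "ereal_expectation_exists M U"
    unfolding ereal_expectation_exists_def z by simp
qed

lemma oe_upper:
  assumes "U \<in> borel_measurable M" "\<forall>\<omega>\<in>space M. 0 \<le> Y \<omega>" "\<forall>\<omega>\<in>space M. Y \<omega> \<le> U \<omega>"
  shows "outer_expectation M Y \<le> enn2ereal (\<integral>\<^sup>+ x. e2ennreal (U x) \<partial>M)"
proof -
  have n: "\<forall>\<omega>\<in>space M. 0 \<le> U \<omega>" using assms order_trans by blast
  show ?thesis unfolding outer_expectation_def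
    by (rule Inf_lower, rule CollectI, rule exI[of _ U]) (use assms ee_nonneg[OF n] in auto)
qed

lemma oe_obtain:
  assumes "outer_expectation M Y < ereal b" "\<forall>\<omega>\<in>space M. 0 \<le> Y \<omega>" "0 \<le> b"
  obtains V where "V \<in> borel_measurable M" "\<forall>\<omega>\<in>space M. Y \<omega> \<le> enn2ereal (V \<omega>)"
    "(\<integral>\<^sup>+ x. V x \<partial>M) < ennreal b"
proof -
  from assms(1) obtain U where U: "U \<in> borel_measurable M" "\<forall>\<omega>\<in>space M. Y \<omega> \<le> U \<omega>"
    "ereal_expectation M U < ereal b"
    unfolding outer_expectation_def Inf_less_iff by blast
  have n: "\<forall>\<omega>\<in>space M. 0 \<le> U \<omega>" using assms U order_trans by blast
  have "enn2ereal (\<integral>\<^sup>+ x. e2ennreal (U x) \<partial>M) < enn2ereal (ennreal b)"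
    using U(3) ee_nonneg[OF n] assms(3) by simp
  then have "(\<integral>\<^sup>+ x. e2ennreal (U x) \<partial>M) < ennreal b"
    by (simp add: less_ennreal.rep_eq)
  moreover have "\<forall>\<omega>\<in>space M. Y \<omega> \<le> enn2ereal (e2ennreal (U \<omega>))"
    using U(2) n by (simp add: enn2ereal_e2ennreal)
  moreover have "(\<lambda>x. e2ennreal (U x)) \<in> borel_measurable M" using U(1) by measurable
  ultimately show ?thesis using that by blast
qed

lemma oe_zero: "outer_expectation M (\<lambda>_. 0) \<le> 0"
  using oe_upper[of "\<lambda>_. 0" M "\<lambda>_. 0"] by (simp add: zero_ennreal.rep_eq)

lemma oe_comb:
  fixes a b x z :: real
  assumes "0 \<le> a" "0 \<le> b" "0 \<le> x" "0 \<le> z"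
    and X: "\<forall>\<omega>\<in>space M. 0 \<le> X \<omega>" and Z: "\<forall>\<omega>\<in>space M. 0 \<le> Z \<omega>"
    and Y: "\<forall>\<omega>\<in>space M. 0 \<le> Y \<omega>"
    and le: "\<forall>\<omega>\<in>space M. Y \<omega> \<le> ereal a * X \<omega> + ereal b * Z \<omega>"
    and ex: "outer_expectation M X \<le> ereal x" and ez: "outer_expectation M Z \<le> ereal z"
  shows "outer_expectation M Y \<le> ereal (a * x + b * z)"
proof (rule ereal_le_epsilon2)
  fix e :: real assume e: "0 < e"
  define d where "d = e / (a + b + 1)"
  have d: "0 < d" using e assms by (simp add: d_def)
  have "outer_expectation M X < ereal (x + d)" using ex d by (simp add: le_less_trans)
  then obtain V1 where V1: "V1 \<in> borel_measurable M" "\<forall>\<omega>\<in>space M. X \<omega> \<le> enn2ereal (V1 \<omega>)"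
    "(\<integral>\<^sup>+ x. V1 x \<partial>M) < ennreal (x + d)"
    using oe_obtain[OF _ X] d assms by (metis add_nonneg_nonneg less_imp_le)
  have "outer_expectation M Z < ereal (z + d)" using ez d by (simp add: le_less_trans)
  then obtain V2 where V2: "V2 \<in> borel_measurable M" "\<forall>\<omega>\<in>space M. Z \<omega> \<le> enn2ereal (V2 \<omega>)"
    "(\<integral>\<^sup>+ x. V2 x \<partial>M) < ennreal (z + d)"
    using oe_obtain[OF _ Z] d assms by (metis add_nonneg_nonneg less_imp_le)
  define V where "V = (\<lambda>\<omega>. ennreal a * V1 \<omega> + ennreal b * V2 \<omega>)"
  have Vm: "V \<in> borel_measurable M" unfolding V_def using V1(1) V2(1) by measurable
  have Um: "(\<lambda>\<omega>. enn2ereal (V \<omega>)) \<in> borel_measurable M" using Vm by measurable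
  have "\<forall>\<omega>\<in>space M. Y \<omega> \<le> enn2ereal (V \<omega>)"
  proof
    fix \<omega> assume w: "\<omega> \<in> space M"
    have "Y \<omega> \<le> ereal a * X \<omega> + ereal b * Z \<omega>" using le w by blast
    also have "\<dots> \<le> ereal a * enn2ereal (V1 \<omega>) + ereal b * enn2ereal (V2 \<omega>)"
      using V1(2) V2(2) w assms by (intro add_mono ereal_mult_left_mono) auto
    also have "\<dots> = enn2ereal (V \<omega>)"
      unfolding V_def using assms by (simp add: plus_ennreal.rep_eq times_ennreal.rep_eq)
    finally show "Y \<omega> \<le> enn2ereal (V \<omega>)" .
  qed
  then have "outer_expectation M Y \<le> enn2ereal (\<integral>\<^sup>+ x. e2ennreal (enn2ereal (V x)) \<partial>M)"
    by (intro oe_upper[OF Um Y])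
  also have "(\<integral>\<^sup>+ x. e2ennreal (enn2ereal (V x)) \<partial>M) = (\<integral>\<^sup>+ x. V x \<partial>M)"
    by (simp add: e2ennreal_enn2ereal)
  also have "(\<integral>\<^sup>+ x. V x \<partial>M) = ennreal a * (\<integral>\<^sup>+ x. V1 x \<partial>M) + ennreal b * (\<integral>\<^sup>+ x. V2 x \<partial>M)"
    unfolding V_def using V1(1) V2(1) by (simp add: nn_integral_add nn_integral_cmult)
  also have "\<dots> \<le> ennreal a * ennreal (x + d) + ennreal b * ennreal (z + d)"
    using V1(3) V2(3) by (intro add_mono mult_left_mono) auto
  also have "\<dots> = ennreal (a * (x + d)) + ennreal (b * (z + d))"
    using assms d by (simp add: ennreal_mult)
  also have "\<dots> = ennreal (a * (x + d) + b * (z + d))"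
    using assms d by (intro ennreal_plus[symmetric]) auto
  also have "a * (x + d) + b * (z + d) = a * x + b * z + (a + b) * d"
    by (simp add: algebra_simps)
  finally have "outer_expectation M Y \<le> enn2ereal (ennreal (a * x + b * z + (a + b) * d))"
    by (simp add: less_eq_ennreal.rep_eq del: ennreal_plus)
  moreover have "enn2ereal (ennreal (a * x + b * z + (a + b) * d)) = ereal (a * x + b * z + (a + b) * d)"
    using assms d by (intro enn2ereal_ennreal) auto
  ultimately have "outer_expectation M Y \<le> ereal (a * x + b * z + (a + b) * d)" by simp
  moreover have "(a + b) * d \<le> e" using assms e unfolding d_def by (simp add: field_simps)
  ultimately show "outer_expectation M Y \<le> ereal (a * x + b * z) + ereal e"
    by (metis add_left_mono ereal_less_eq(3) order_trans plus_ereal.simps(1))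
qed


lemma cvx:
  fixes s t l \<nu> :: real
  assumes "0 \<le> s" "0 \<le> t" "0 < l" "l < 1" "1 \<le> \<nu>"
  shows "(s + t) powr \<nu> \<le> l powr (1 - \<nu>) * s powr \<nu> + (1 - l) powr (1 - \<nu>) * t powr \<nu>"
proof -
  have g1: "1 \<le> x powr (1 - \<nu>)" if "0 < x" "x \<le> 1" for x :: real
    using that assms by (metis le_iff_diff_le_0 powr_mono2' powr_one_eq_one)
  show ?thesis
  proof (cases "s = 0 \<or> t = 0")
    case True
    then show ?thesis
    proof
      assume "s = 0"
      moreover have "t powr \<nu> \<le> (1 - l) powr (1 - \<nu>) * t powr \<nu>"
        using g1[of "1 - l"] assms by (simp add: mult_le_cancel_right1)
      ultimately show ?thesis using assms by simp
    next
      assume "t = 0"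
      moreover have "s powr \<nu> \<le> l powr (1 - \<nu>) * s powr \<nu>"
        using g1[of "l"] assms by (simp add: mult_le_cancel_right1)
      ultimately show ?thesis using assms by simp
    qed
  next
    case False
    then have sp: "0 < s" "0 < t" using assms by auto
    have "((1 - (1 - l)) *\<^sub>R (s / l) + (1 - l) *\<^sub>R (t / (1 - l))) powr \<nu>
      \<le> (1 - (1 - l)) * (s / l) powr \<nu> + (1 - l) * (t / (1 - l)) powr \<nu>"
      by (rule convex_onD[OF powr_convex[OF assms(5)]]) (use assms sp in auto)
    moreover have "(1 - (1 - l)) *\<^sub>R (s / l) + (1 - l) *\<^sub>R (t / (1 - l)) = s + t"
      using assms by simp
    moreover have "l * (s / l) powr \<nu> = l powr (1 - \<nu>) * s powr \<nu>"
      using assms sp by (simp add: powr_divide powr_diff)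
    moreover have "(1 - l) * (t / (1 - l)) powr \<nu> = (1 - l) powr (1 - \<nu>) * t powr \<nu>"
      using assms sp by (simp add: powr_divide powr_diff)
    ultimately show ?thesis by simp
  qed
qed

lemma sum_split_Icc:
  fixes f :: "nat \<Rightarrow> real"
  assumes "i \<le> m" "m \<le> k"
  shows "(\<Sum>x = i..k. f x) = (\<Sum>x = i..m. f x) + (\<Sum>x = m + 1..k. f x)"
proof -
  have "{i..k} = {i..m} \<union> {m + 1..k}" using assms by auto
  moreover have "{i..m} \<inter> {m + 1..k} = {}" by auto
  ultimately show ?thesis by (simp add: sum.union_disjoint)
qed


lemma mps_nonneg: "i \<le> j \<Longrightarrow> 0 \<le> max_partial_sum W i j \<omega> \<psi>"
  unfolding max_partial_sum_def
  by (rule order_trans[OF abs_ge_zero Max_ge[where x="\<bar>partial_sum W i i \<omega> \<psi>\<bar>"]]) auto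

lemma mps_ge: "i \<le> k \<Longrightarrow> k \<le> j \<Longrightarrow> \<bar>partial_sum W i k \<omega> \<psi>\<bar> \<le> max_partial_sum W i j \<omega> \<psi>"
  unfolding max_partial_sum_def by (rule Max_ge) auto

lemma pointwise:
  fixes W :: "nat \<Rightarrow> 'a \<Rightarrow> 'p \<Rightarrow> real"
  assumes "i \<le> m" "m \<le> j" "0 < l" "l < 1" "1 \<le> \<nu>"
  shows "\<bar>max_partial_sum W i j \<omega> \<psi>\<bar> powr \<nu> \<le> l powr (1 - \<nu>) * \<bar>partial_sum W i m \<omega> \<psi>\<bar> powr \<nu>
     + (1 - l) powr (1 - \<nu>) * ((if m = i then 0 else \<bar>max_partial_sum W i (m - 1) \<omega> \<psi>\<bar> powr \<nu>)
        + (if m = j then 0 else \<bar>max_partial_sum W (m + 1) j \<omega> \<psi>\<bar> powr \<nu>))"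
proof -
  define s where "s = \<bar>partial_sum W i m \<omega> \<psi>\<bar>"
  define P1 where "P1 = (if m = i then 0 else max_partial_sum W i (m - 1) \<omega> \<psi>)"
  define P2 where "P2 = (if m = j then 0 else max_partial_sum W (m + 1) j \<omega> \<psi>)"
  have P1: "0 \<le> P1" unfolding P1_def using assms by (auto intro: mps_nonneg)
  have P2: "0 \<le> P2" unfolding P2_def using assms by (auto intro: mps_nonneg)
  have s: "0 \<le> s" unfolding s_def by simp
  define t where "t = max P1 P2"
  have t: "0 \<le> t" using P1 t_def by auto
  have le: "max_partial_sum W i j \<omega> \<psi> \<le> s + t"
    unfolding max_partial_sum_def
  proof (subst Max_le_iff, simp, use assms in simp, intro ballI)
    fix y assume "y \<in> (\<lambda>k. \<bar>partial_sum W i k \<omega> \<psi>\<bar>) ` {i..j}"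
    then obtain k where k: "k \<in> {i..j}" "y = \<bar>partial_sum W i k \<omega> \<psi>\<bar>" by auto
    consider "k < m" | "k = m" | "m < k" by linarith
    then show "y \<le> s + t"
    proof cases
      case 1
      then have "y \<le> P1" unfolding P1_def using k by (auto intro: mps_ge)
      then show ?thesis using s t_def by linarith
    next
      case 2
      then show ?thesis using k s_def t by simp
    next
      case 3
      have "partial_sum W i k \<omega> \<psi> = partial_sum W i m \<omega> \<psi> + partial_sum W (m + 1) k \<omega> \<psi>"
        unfolding partial_sum_def using 3 assms by (intro sum_split_Icc) auto
      moreover have "\<bar>partial_sum W (m + 1) k \<omega> \<psi>\<bar> \<le> P2"
        unfolding P2_def using 3 k by (auto intro: mps_ge)
      ultimately show ?thesis using k s_def t_def by auto
    qed
  qed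
  have A: "\<bar>max_partial_sum W i j \<omega> \<psi>\<bar> powr \<nu> \<le> (s + t) powr \<nu>"
  proof -
    have "0 \<le> max_partial_sum W i j \<omega> \<psi>" using assms by (intro mps_nonneg) auto
    then show ?thesis using le assms by (intro powr_mono2) auto
  qed
  have B: "(s + t) powr \<nu> \<le> l powr (1 - \<nu>) * s powr \<nu> + (1 - l) powr (1 - \<nu>) * t powr \<nu>"
    using cvx[OF s t assms(3-5)] .
  have C: "t powr \<nu> \<le> P1 powr \<nu> + P2 powr \<nu>"
    unfolding t_def by (cases "P1 \<le> P2") (auto simp: max_def)
  have D: "(1 - l) powr (1 - \<nu>) * t powr \<nu> \<le> (1 - l) powr (1 - \<nu>) * (P1 powr \<nu> + P2 powr \<nu>)"
    using C by (intro mult_left_mono) auto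
  have E1: "P1 powr \<nu> = (if m = i then 0 else \<bar>max_partial_sum W i (m - 1) \<omega> \<psi>\<bar> powr \<nu>)"
    unfolding P1_def using assms by (auto intro!: arg_cong2[where f="(powr)"] abs_of_nonneg[symmetric] mps_nonneg)
  have E2: "P2 powr \<nu> = (if m = j then 0 else \<bar>max_partial_sum W (m + 1) j \<omega> \<psi>\<bar> powr \<nu>)"
    unfolding P2_def using assms by (auto intro!: arg_cong2[where f="(powr)"] abs_of_nonneg[symmetric] mps_nonneg)
  show ?thesis using A B D unfolding E1[symmetric] E2[symmetric] s_def by linarith
qed


lemma g_mono_gen:
  fixes g :: "nat \<Rightarrow> nat \<Rightarrow> real"
  assumes gm: "\<forall>i j. 1 \<le> i \<and> i \<le> j \<and> j \<le> n - 1 \<longrightarrow> g i j \<le> g i (j + 1)"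
    and "1 \<le> i" "i \<le> m" "m \<le> j" "j \<le> n"
  shows "g i m \<le> g i j"
  using assms(4,5)
proof (induction j)
  case 0
  then show ?case by simp
next
  case (Suc j)
  show ?case
  proof (cases "m = Suc j")
    case True then show ?thesis by simp
  next
    case False
    then have "g i m \<le> g i j" using Suc by simp
    moreover have "g i j \<le> g i (j + 1)" using gm assms(2,3) Suc False by auto
    ultimately show ?thesis by simp
  qed
qed

lemma real_const:
  fixes Q \<alpha> \<nu> :: real
  assumes "\<nu> \<ge> 1" "\<alpha> > 1" "1 \<le> Q" "Q < 2 powr ((\<alpha> - 1) / \<alpha>)"
  defines "r \<equiv> Q powr (\<alpha> / \<nu>) / 2 powr ((\<alpha> - 1) / \<nu>)"
  shows "0 < r" "r < 1" "r powr \<nu> = Q powr \<alpha> / 2 powr (\<alpha> - 1)"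
proof -
  show "0 < r" unfolding r_def using assms by simp
  have "Q powr (\<alpha> / \<nu>) < (2 powr ((\<alpha> - 1) / \<alpha>)) powr (\<alpha> / \<nu>)"
    using assms by (intro powr_less_mono2) auto
  also have "\<dots> = 2 powr ((\<alpha> - 1) / \<nu>)" using assms by (simp add: powr_powr)
  finally show "r < 1" unfolding r_def by simp
  show "r powr \<nu> = Q powr \<alpha> / 2 powr (\<alpha> - 1)"
    unfolding r_def using assms by (simp add: powr_divide powr_powr)
qed

lemma final_alg:
  fixes r \<nu> G h :: real
  assumes "0 < r" "r < 1" "2 * h = r powr \<nu> * G"
  shows "(1 - r) powr (1 - \<nu>) * G + r powr (1 - \<nu>) * ((1 - r) powr (- \<nu>) * h + (1 - r) powr (- \<nu>) * h)
     = (1 - r) powr (- \<nu>) * G"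
proof -
  have a: "(1 - r) powr (1 - \<nu>) = (1 - r) * (1 - r) powr (- \<nu>)"
    using powr_add[of "1 - r" 1 "- \<nu>"] assms by simp
  have b: "r powr (1 - \<nu>) * r powr \<nu> = r"
    using assms by (simp add: powr_add[symmetric])
  have "r powr (1 - \<nu>) * ((1 - r) powr (- \<nu>) * h + (1 - r) powr (- \<nu>) * h)
     = (1 - r) powr (- \<nu>) * (r powr (1 - \<nu>) * (2 * h))" by (simp add: algebra_simps)
  also have "\<dots> = (1 - r) powr (- \<nu>) * r * G" using b assms(3) by (simp add: mult.assoc[symmetric])
  finally show ?thesis unfolding a by (simp add: algebra_simps)
qed


theorem proposition7p3:
  fixes M :: "'a measure" and W :: "nat \<Rightarrow> 'a \<Rightarrow> 'p \<Rightarrow> real" and \<Psi> :: "'p set"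
    and g :: "nat \<Rightarrow> nat \<Rightarrow> real" and n :: nat and \<alpha> \<nu> Q :: real
  assumes "prob_space M"
    and "\<nu> \<ge> 1" and "\<Psi> \<noteq> {}" and "n \<ge> 1"
    and bdd: "\<forall>k\<in>{1..n}. \<forall>\<omega>\<in>space M. bounded ((\<lambda>\<psi>. W k \<omega> \<psi>) ` \<Psi>)"
    and "\<alpha> > 1"
    and mom: "\<forall>i j. 1 \<le> i \<and> i \<le> j \<and> j \<le> n \<longrightarrow>
       outer_expectation M (\<lambda>\<omega>. SUP \<psi>\<in>\<Psi>. ereal (\<bar>partial_sum W i j \<omega> \<psi>\<bar> powr \<nu>))
         \<le> ereal (g i j powr \<alpha>)"
    and g_nonneg: "\<forall>i\<in>{1..n}. \<forall>j\<in>{1..n}. g i j \<ge> 0"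
    and g_mono: "\<forall>i j. 1 \<le> i \<and> i \<le> j \<and> j \<le> n - 1 \<longrightarrow> g i j \<le> g i (j + 1)"
    and g_super: "\<forall>i j k. 1 \<le> i \<and> i \<le> j \<and> j < k \<and> k \<le> n \<longrightarrow> g i j + g (j + 1) k \<le> Q * g i k"
    and "1 \<le> Q" and "Q < 2 powr ((\<alpha> - 1) / \<alpha>)"
  shows "outer_expectation M (\<lambda>\<omega>. SUP \<psi>\<in>\<Psi>. ereal (\<bar>max_partial_sum W 1 n \<omega> \<psi>\<bar> powr \<nu>))
    \<le> ereal ((1 - Q powr (\<alpha> / \<nu>) / 2 powr ((\<alpha> - 1) / \<nu>)) powr (- \<nu>) * g 1 n powr \<alpha>)"
proof -
  define r where "r = Q powr (\<alpha> / \<nu>) / 2 powr ((\<alpha> - 1) / \<nu>)"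
  have r0: "0 < r" and r1: "r < 1" and rnu: "r powr \<nu> = Q powr \<alpha> / 2 powr (\<alpha> - 1)"
    using real_const[of \<nu> \<alpha> Q] assms unfolding r_def by auto
  define A where "A = (1 - r) powr (- \<nu>)"
  define a where "a = (1 - r) powr (1 - \<nu>)"
  define b where "b = r powr (1 - \<nu>)"
  have A0: "0 \<le> A" "0 \<le> a" "0 \<le> b" unfolding A_def a_def b_def by auto
  define T where "T = (\<lambda>i j \<omega>. SUP \<psi>\<in>\<Psi>. ereal (\<bar>max_partial_sum W i j \<omega> \<psi>\<bar> powr \<nu>))"
  define S where "S = (\<lambda>i j \<omega>. SUP \<psi>\<in>\<Psi>. ereal (\<bar>partial_sum W i j \<omega> \<psi>\<bar> powr \<nu>))"
  obtain \<psi>0 where \<psi>0: "\<psi>0 \<in> \<Psi>" using assms(3) by blast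
  have Tn: "0 \<le> T i j \<omega>" for i j \<omega>
    unfolding T_def by (rule SUP_upper2[OF \<psi>0]) simp
  have Sn: "0 \<le> S i j \<omega>" for i j \<omega>
    unfolding S_def by (rule SUP_upper2[OF \<psi>0]) simp
  have main: "\<forall>i j. 1 \<le> i \<and> i \<le> j \<and> j \<le> n \<and> j - i = d \<longrightarrow>
      outer_expectation M (T i j) \<le> ereal (A * g i j powr \<alpha>)" for d
  proof (induction d rule: less_induct)
    case (less d)
    show ?case
    proof (intro allI impI, elim conjE)
      fix i j assume ij: "1 \<le> i" "i \<le> j" "j \<le> n" "j - i = d"
      define K where "K = {k \<in> {i..j}. k = i \<or> g i (k - 1) \<le> Q * g i j / 2}"
      define m where "m = Max K"
      have Kf: "finite K" "i \<in> K" unfolding K_def using ij by auto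
      have mK: "m \<in> K" unfolding m_def using Kf by (intro Max_in) auto
      have im: "i \<le> m" "m \<le> j" using mK unfolding K_def by auto
      have hm1: "g i (m - 1) \<le> Q * g i j / 2" if "m \<noteq> i" using mK that unfolding K_def by auto
      have hm2: "g (m + 1) j < Q * g i j / 2" if "m \<noteq> j"
      proof -
        have "m + 1 \<notin> K" using Max_ge[OF Kf(1), of "m + 1"] unfolding m_def[symmetric] by auto
        moreover have "m + 1 \<in> {i..j}" "m + 1 \<noteq> i" using im that by auto
        ultimately have "\<not> g i (m + 1 - 1) \<le> Q * g i j / 2" unfolding K_def by blast
        then have "Q * g i j / 2 < g i m" by simp
        moreover have "g i m + g (m + 1) j \<le> Q * g i j" using g_super im ij that by auto
        ultimately show ?thesis by linarith
      qed
      define h where "h = (Q * g i j / 2) powr \<alpha>"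
      have gij: "0 \<le> g i j" using g_nonneg ij by auto
      have h2: "2 * h = r powr \<nu> * g i j powr \<alpha>"
      proof -
        have "h = Q powr \<alpha> * g i j powr \<alpha> / 2 powr \<alpha>"
          unfolding h_def using gij assms by (simp add: powr_divide powr_mult)
        moreover have "2 powr \<alpha> = 2 * 2 powr (\<alpha> - 1)"
          using powr_add[of 2 1 "\<alpha> - 1"] by simp
        ultimately show ?thesis unfolding rnu by simp
      qed
      define Y1 where "Y1 = (\<lambda>\<omega>. if m = i then 0 else T i (m - 1) \<omega>)"
      define Y2 where "Y2 = (\<lambda>\<omega>. if m = j then 0 else T (m + 1) j \<omega>)"
      have Y1n: "0 \<le> Y1 \<omega>" for \<omega> unfolding Y1_def using Tn by auto
      have Y2n: "0 \<le> Y2 \<omega>" for \<omega> unfolding Y2_def using Tn by auto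
      have bY1: "outer_expectation M Y1 \<le> ereal (A * h)"
      proof (cases "m = i")
        case True
        then have "outer_expectation M Y1 \<le> 0" unfolding Y1_def using oe_zero by simp
        also have "0 \<le> ereal (A * h)" using A0 unfolding h_def by simp
        finally show ?thesis .
      next
        case False
        have "outer_expectation M Y1 = outer_expectation M (T i (m - 1))"
          unfolding Y1_def using False by simp
        also have "\<dots> \<le> ereal (A * g i (m - 1) powr \<alpha>)"
        proof -
          have "m - 1 - i < d" using ij im False by auto
          moreover have "i \<le> m - 1" "m - 1 \<le> n" "m - 1 - i = m - 1 - i" using ij im False by arith+
          ultimately show ?thesis using less ij by blast
        qed
        also have "A * g i (m - 1) powr \<alpha> \<le> A * h"
        proof -
          have "i \<in> {1..n}" "m - 1 \<in> {1..n}" using ij im False by auto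
          then have "0 \<le> g i (m - 1)" using g_nonneg by blast
          then show ?thesis unfolding h_def using A0 hm1[OF False] assms
            by (intro mult_left_mono powr_mono2) auto
        qed
        finally show ?thesis by simp
      qed
      have bY2: "outer_expectation M Y2 \<le> ereal (A * h)"
      proof (cases "m = j")
        case True
        then have "outer_expectation M Y2 \<le> 0" unfolding Y2_def using oe_zero by simp
        also have "0 \<le> ereal (A * h)" using A0 unfolding h_def by simp
        finally show ?thesis .
      next
        case False
        have "outer_expectation M Y2 = outer_expectation M (T (m + 1) j)"
          unfolding Y2_def using False by simp
        also have "\<dots> \<le> ereal (A * g (m + 1) j powr \<alpha>)"
        proof -
          have "j - (m + 1) < d" using ij im False by auto
          from less[OF this, rule_format, of "m + 1" j] show ?thesis using ij im False by auto
        qed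
        also have "A * g (m + 1) j powr \<alpha> \<le> A * h"
        proof -
          have "m + 1 \<in> {1..n}" "j \<in> {1..n}" using ij im False by auto
          then have "0 \<le> g (m + 1) j" using g_nonneg by blast
          then show ?thesis unfolding h_def using A0 hm2[OF False] assms
            by (intro mult_left_mono powr_mono2) auto
        qed
        finally show ?thesis by simp
      qed
      have hn: "0 \<le> A * h" using A0 unfolding h_def by simp
      have bZ: "outer_expectation M (\<lambda>\<omega>. Y1 \<omega> + Y2 \<omega>) \<le> ereal (1 * (A * h) + 1 * (A * h))"
        by (rule oe_comb[OF _ _ hn hn _ _ _ _ bY1 bY2]) (use Y1n Y2n in \<open>auto intro: add_nonneg_nonneg\<close>)
      have bX: "outer_expectation M (S i m) \<le> ereal (g i j powr \<alpha>)"
      proof -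
        have "outer_expectation M (S i m) \<le> ereal (g i m powr \<alpha>)"
          using mom ij im unfolding S_def by auto
        also have "g i m powr \<alpha> \<le> g i j powr \<alpha>"
          using g_mono_gen[OF g_mono, of i m j] ij im g_nonneg assms by (intro powr_mono2) auto
        finally show ?thesis by simp
      qed
      have pw: "T i j \<omega> \<le> ereal a * S i m \<omega> + ereal b * (Y1 \<omega> + Y2 \<omega>)" for \<omega>
        unfolding T_def
      proof (rule SUP_least)
        fix \<psi> assume \<psi>: "\<psi> \<in> \<Psi>"
        define p1 where "p1 = (if m = i then 0 else \<bar>max_partial_sum W i (m - 1) \<omega> \<psi>\<bar> powr \<nu>)"
        define p2 where "p2 = (if m = j then 0 else \<bar>max_partial_sum W (m + 1) j \<omega> \<psi>\<bar> powr \<nu>)"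
        have "\<bar>max_partial_sum W i j \<omega> \<psi>\<bar> powr \<nu> \<le> a * \<bar>partial_sum W i m \<omega> \<psi>\<bar> powr \<nu> + b * (p1 + p2)"
          using pointwise[of i m j "1 - r" \<nu> W \<omega> \<psi>] im r0 r1 assms
          unfolding a_def b_def p1_def p2_def by simp
        then have "ereal (\<bar>max_partial_sum W i j \<omega> \<psi>\<bar> powr \<nu>)
            \<le> ereal a * ereal (\<bar>partial_sum W i m \<omega> \<psi>\<bar> powr \<nu>) + ereal b * (ereal p1 + ereal p2)"
          by simp
        also have "\<dots> \<le> ereal a * S i m \<omega> + ereal b * (Y1 \<omega> + Y2 \<omega>)"
        proof (intro add_mono ereal_mult_left_mono)
          show "ereal (\<bar>partial_sum W i m \<omega> \<psi>\<bar> powr \<nu>) \<le> S i m \<omega>"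
            unfolding S_def using \<psi> by (rule SUP_upper2) simp
          show "ereal p1 \<le> Y1 \<omega>"
            unfolding p1_def Y1_def T_def using \<psi> by (auto intro: SUP_upper2)
          show "ereal p2 \<le> Y2 \<omega>"
            unfolding p2_def Y2_def T_def using \<psi> by (auto intro: SUP_upper2)
        qed (use A0 in auto)
        finally show "ereal (\<bar>max_partial_sum W i j \<omega> \<psi>\<bar> powr \<nu>) \<le> ereal a * S i m \<omega> + ereal b * (Y1 \<omega> + Y2 \<omega>)" .
      qed
      have "outer_expectation M (T i j) \<le> ereal (a * g i j powr \<alpha> + b * (1 * (A * h) + 1 * (A * h)))"
        by (rule oe_comb[OF A0(2,3) _ _ _ _ _ _ bX bZ]) (use hn Sn Tn Y1n Y2n pw in \<open>auto intro: add_nonneg_nonneg\<close>)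
      also have "a * g i j powr \<alpha> + b * (1 * (A * h) + 1 * (A * h)) = A * g i j powr \<alpha>"
        using final_alg[OF r0 r1 h2] unfolding a_def b_def A_def by (simp add: mult.assoc)
      finally show "outer_expectation M (T i j) \<le> ereal (A * g i j powr \<alpha>)" .
    qed
  qed
  have "outer_expectation M (T 1 n) \<le> ereal (A * g 1 n powr \<alpha>)"
    using main[of "n - 1"] assms by auto
  then show ?thesis unfolding T_def A_def r_def .
qed

end
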